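(* Let $n$ be a positive integer and let $a=(a_1,\ldots,a_n)$, $b=(b_1,\ldots,b_n)$ be vectors of nonnegative integers with $0\le a_k\le b_k$ for all $k\in[n]$. Then for all $j\in[n]$, \[\mathsf{invol}_j(b)\le \mathsf{invol}_j(a)\,n^{\|b-a\|_1}\prod_{k=1}^n\exp\!\left(\frac{b_k^2}{2k}\right),\] where $\|b-a\|_1=\sum_{k=1}^n|b_k-a_k|$.
   Context: For a vector $a$ of nonnegative integers and $m\ge1$ (with $m$ at most the length of $a$), $\mathsf{invol}_m(a)=\left(\prod_{k=1}^m k^{a_k}\right)\prod_{k=1}^m\sum_{j=0}^{\lfloor a_k/2\rfloor}\frac{(a_k)_{2j}}{(2k)^j j!}$, where $(x)_r=x(x-1)\cdots(x-r+1)$. *)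

theory Defs
  imports Complex_Main
begin

definition falling_fact :: "real \<Rightarrow> nat \<Rightarrow> real" where
  "falling_fact x r = (\<Prod>i<r. x - real i)"

text \<open>Vectors a = (a_1,...,a_n) are represented as functions nat => nat,
  only the values at indices 1..m matter.\<close>
definition invol :: "nat \<Rightarrow> (nat \<Rightarrow> nat) \<Rightarrow> real" where
  "invol m a = (\<Prod>k=1..m. real k ^ a k) *
     (\<Prod>k=1..m. \<Sum>j=0..a k div 2.
        falling_fact (real (a k)) (2*j) / ((2 * real k) ^ j * fact j))"

end

theory Submission
  imports Defs
begin

lemma exp_partial:
  fixes x :: real assumes "0 \<le> x"
  shows "(\<Sum>j=0..N. x^j / fact j) \<le> exp x"
proof -
  have s: "(\<lambda>n. x^n / fact n) sums exp x"
    using exp_converges[of x] by (simp add: divide_inverse mult.commute)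
  have "(\<Sum>j=0..N. x^j / fact j) \<le> (\<Sum>n. x^n / fact n)"
    by (rule sum_le_suminf) (use s assms in \<open>auto simp: sums_iff\<close>)
  also have "\<dots> = exp x" using s by (simp add: sums_iff)
  finally show ?thesis .
qed

lemma ff_bound:
  assumes "r \<le> m"
  shows "0 \<le> falling_fact (real m) r \<and> falling_fact (real m) r \<le> real m ^ r"
proof
  show "0 \<le> falling_fact (real m) r" unfolding falling_fact_def
    using assms by (intro prod_nonneg) auto
  have "falling_fact (real m) r \<le> (\<Prod>i<r. real m)" unfolding falling_fact_def
    using assms by (intro prod_mono) auto
  then show "falling_fact (real m) r \<le> real m ^ r" by simp
qed

definition S :: "nat \<Rightarrow> nat \<Rightarrow> real" where
  "S k m = (\<Sum>j=0..m div 2.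
        falling_fact (real m) (2*j) / ((2 * real k) ^ j * fact j))"

lemma S_ge1: "k \<ge> 1 \<Longrightarrow> 1 \<le> S k m"
proof -
  assume k: "k \<ge> 1"
  have nn: "\<And>j. j \<in> {0..m div 2} \<Longrightarrow> 0 \<le> falling_fact (real m) (2*j) / ((2 * real k) ^ j * fact j)"
    using ff_bound k by (intro divide_nonneg_pos) auto
  have "(\<Sum>j\<in>{0}. falling_fact (real m) (2*j) / ((2 * real k) ^ j * fact j)) \<le> S k m"
    unfolding S_def by (rule sum_mono2) (use nn in auto)
  then show ?thesis by (simp add: falling_fact_def)
qed

lemma S_le: "k \<ge> 1 \<Longrightarrow> S k m \<le> exp (real m ^ 2 / (2 * real k))"
proof -
  assume k: "k \<ge> 1"
  have "S k m \<le> (\<Sum>j=0..m div 2. (real m ^ 2 / (2 * real k))^j / fact j)"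
    unfolding S_def
  proof (rule sum_mono)
    fix j assume j: "j \<in> {0..m div 2}"
    have pos: "0 < (2 * real k) ^ j * fact j" using k by auto
    have "falling_fact (real m) (2*j) \<le> real m ^ (2*j)" using ff_bound[of "2*j" m] j by auto
    then have "falling_fact (real m) (2*j) / ((2 * real k) ^ j * fact j)
       \<le> real m ^ (2*j) / ((2 * real k) ^ j * fact j)"
      using pos by (intro divide_right_mono) auto
    also have "\<dots> = (real m ^ 2 / (2 * real k))^j / fact j"
      by (simp add: power_divide power_mult)
    finally show "falling_fact (real m) (2*j) / ((2 * real k) ^ j * fact j)
       \<le> (real m ^ 2 / (2 * real k))^j / fact j" .
  qed
  also have "\<dots> \<le> exp (real m ^ 2 / (2 * real k))"
    by (rule exp_partial) simp
  finally show ?thesis .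
qed

lemma invol_S: "invol m a = (\<Prod>k=1..m. real k ^ a k) * (\<Prod>k=1..m. S k (a k))"
  unfolding invol_def S_def by simp

theorem lemma5p3:
  fixes n :: nat and a b :: "nat \<Rightarrow> nat"
  assumes "n \<ge> 1"
    and "\<forall>k\<in>{1..n}. a k \<le> b k"
  shows "\<forall>j\<in>{1..n}. invol j b \<le>
     invol j a * real n ^ (\<Sum>k=1..n. b k - a k) *
     (\<Prod>k=1..n. exp (real (b k) ^ 2 / (2 * real k)))"
proof
  fix j assume j: "j \<in> {1..n}"
  define Pa where "Pa = (\<Prod>k=1..j. real k ^ a k)"
  define Pb where "Pb = (\<Prod>k=1..j. real k ^ b k)"
  define N where "N = real n ^ (\<Sum>k=1..n. b k - a k)"
  define Ej where "Ej = (\<Prod>k=1..j. exp (real (b k) ^ 2 / (2 * real k)))"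
  define En where "En = (\<Prod>k=1..n. exp (real (b k) ^ 2 / (2 * real k)))"
  have Pa0: "0 \<le> Pa" unfolding Pa_def by (intro prod_nonneg) auto
  have Pb0: "0 \<le> Pb" unfolding Pb_def by (intro prod_nonneg) auto
  have N0: "0 \<le> N" unfolding N_def by simp
  have Ej0: "0 \<le> Ej" unfolding Ej_def by (intro prod_nonneg) auto
  have Qa: "1 \<le> (\<Prod>k=1..j. S k (a k))"
    using prod_mono[of "{1..j}" "\<lambda>_. 1::real" "\<lambda>k. S k (a k)"] S_ge1 by auto
  have Qb: "(\<Prod>k=1..j. S k (b k)) \<le> Ej"
    unfolding Ej_def using S_ge1 S_le by (intro prod_mono) (auto intro: order_trans[OF zero_le_one])
  have EjEn: "Ej \<le> En"
  proof -
    have "Ej = exp (\<Sum>k=1..j. real (b k) ^ 2 / (2 * real k))" unfolding Ej_def by (simp add: exp_sum)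
    also have "\<dots> \<le> exp (\<Sum>k=1..n. real (b k) ^ 2 / (2 * real k))"
      using j by (subst exp_le_cancel_iff, intro sum_mono2) auto
    also have "\<dots> = En" unfolding En_def by (simp add: exp_sum)
    finally show ?thesis .
  qed
  have PbPa: "Pb \<le> Pa * N"
  proof -
    have "Pb = (\<Prod>k=1..j. real k ^ a k * real k ^ (b k - a k))"
      unfolding Pb_def using j assms(2)
      by (intro prod.cong) (auto simp: power_add[symmetric])
    also have "\<dots> = Pa * (\<Prod>k=1..j. real k ^ (b k - a k))"
      unfolding Pa_def by (simp add: prod.distrib)
    also have "\<dots> \<le> Pa * (\<Prod>k=1..j. real n ^ (b k - a k))"
      using j Pa0 by (intro mult_left_mono prod_mono) (auto intro: power_mono)
    also have "(\<Prod>k=1..j. real n ^ (b k - a k)) = real n ^ (\<Sum>k=1..j. b k - a k)"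
      by (simp add: power_sum)
    also have "\<dots> \<le> N" unfolding N_def using j assms(1)
      by (intro power_increasing sum_mono2) auto
    finally show ?thesis using Pa0 by (simp add: mult_left_mono)
  qed
  have "invol j b = Pb * (\<Prod>k=1..j. S k (b k))" unfolding invol_S Pb_def ..
  also have "\<dots> \<le> Pb * Ej" by (rule mult_left_mono[OF Qb Pb0])
  also have "\<dots> \<le> (Pa * N) * En" using PbPa EjEn Pb0 Ej0 Pa0 N0
    by (intro mult_mono) auto
  also have "\<dots> \<le> (Pa * (\<Prod>k=1..j. S k (a k))) * N * En"
  proof -
    have "Pa \<le> Pa * (\<Prod>k=1..j. S k (a k))" using Qa Pa0 by (simp add: mult_le_cancel_left1)
    moreover have "0 \<le> N * En" using N0 unfolding En_def by (simp add: prod_nonneg)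
    ultimately show ?thesis by (metis mult.assoc mult_right_mono)
  qed
  also have "\<dots> = invol j a * N * En" unfolding invol_S Pa_def ..
  finally show "invol j b \<le> invol j a * real n ^ (\<Sum>k=1..n. b k - a k) *
     (\<Prod>k=1..n. exp (real (b k) ^ 2 / (2 * real k)))" unfolding N_def En_def .
qed

end
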